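(* Let $p$ be a prime and $n$ a positive integer. Let $m\ge1$, let $k_1,\ldots,k_m$ be positive integers with $k_i\le n$, and let $r_1<r_2<\cdots<r_m$ be positive integers such that $$\lfloor n/p^{r_i}\rfloor-\lfloor k_i/p^{r_i}\rfloor-\lfloor (n-k_i)/p^{r_i}\rfloor=1\quad\text{for } i=1,\ldots,m.$$ Then there exists a single positive integer $k\le n$ such that $$\lfloor n/p^{r_i}\rfloor-\lfloor k/p^{r_i}\rfloor-\lfloor (n-k)/p^{r_i}\rfloor=1\quad\text{for all } i=1,\ldots,m.$$ *)

theory Defs
  imports "HOL-Computational_Algebra.Primes" Complex_Main
begin

end

theory Submission
  imports Defs
begin

lemma carry_iff:
  fixes q n k :: nat
  assumes "q > 0" "k \<le> n"
  shows "(\<lfloor>real n / real q\<rfloor> - \<lfloor>real k / real q\<rfloor> - \<lfloor>real (n - k) / real q\<rfloor> = 1)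
         \<longleftrightarrow> n mod q < k mod q"
proof -
  have fl: "\<And>x. \<lfloor>real x / real q\<rfloor> = int (x div q)"
    by (metis floor_divide_of_nat_eq of_int_of_nat_eq)
  define a b where "a = k" "b = n - k"
  have n: "n = a + b" using assms a_b_def by simp
  have d: "n div q = a div q + b div q + (a mod q + b mod q) div q"
    using n div_add1_eq by simp
  have am: "a mod q < q" "b mod q < q" using assms by auto
  show ?thesis
  proof (cases "a mod q + b mod q \<ge> q")
    case True
    have "(a mod q + b mod q) div q = 1" using True am
      proof -
      have "a mod q + b mod q - q < q" using am by linarith
      thus ?thesis using le_div_geq[OF assms(1) True] by simp
    qed
    moreover have "n mod q = a mod q + b mod q - q"
      proof -
      have "n mod q = (a mod q + b mod q) mod q" using n mod_add_eq by metis
      also have "\<dots> = (a mod q + b mod q - q) mod q" using le_mod_geq[OF True] by simp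
      also have "\<dots> = a mod q + b mod q - q" using am by (intro mod_less) linarith
      finally show ?thesis .
    qed
    ultimately show ?thesis using d am a_b_def True by (simp add: fl)
  next
    case False
    have "(a mod q + b mod q) div q = 0" using False by simp
    moreover have "n mod q = a mod q + b mod q"
      using False n by (metis mod_add_eq mod_less not_le)
    ultimately show ?thesis using d a_b_def by (simp add: fl)
  qed
qed

theorem mainTheorem7:
  fixes p n m :: nat and k r :: "nat \<Rightarrow> nat"
  assumes "prime p" and "n > 0" and "m \<ge> 1"
    and "\<And>i. i \<in> {1..m} \<Longrightarrow> 0 < k i \<and> k i \<le> n"
    and "\<And>i. i \<in> {1..m} \<Longrightarrow> 0 < r i"
    and "\<And>i j. i \<in> {1..m} \<Longrightarrow> j \<in> {1..m} \<Longrightarrow> i < j \<Longrightarrow> r i < r j"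
    and "\<And>i. i \<in> {1..m} \<Longrightarrow>
           \<lfloor>real n / real p ^ r i\<rfloor> - \<lfloor>real (k i) / real p ^ r i\<rfloor>
             - \<lfloor>real (n - k i) / real p ^ r i\<rfloor> = 1"
  shows "\<exists>k0::nat. 0 < k0 \<and> k0 \<le> n \<and>
           (\<forall>i\<in>{1..m}. \<lfloor>real n / real p ^ r i\<rfloor> - \<lfloor>real k0 / real p ^ r i\<rfloor>
             - \<lfloor>real (n - k0) / real p ^ r i\<rfloor> = 1)"
proof -
  have p2: "p \<ge> 2" using assms(1) prime_ge_2_nat by blast
  have pp: "\<And>e. p ^ e > 0" using p2 by simp
  have C: "\<And>i. i \<in> {1..m} \<Longrightarrow> n mod p ^ r i < k i mod p ^ r i"
  proof -
    fix i assume i: "i \<in> {1..m}"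
    have "\<lfloor>real n / real (p ^ r i)\<rfloor> - \<lfloor>real (k i) / real (p ^ r i)\<rfloor>
             - \<lfloor>real (n - k i) / real (p ^ r i)\<rfloor> = 1" using assms(7)[OF i] by simp
    then show "n mod p ^ r i < k i mod p ^ r i"
      using carry_iff[OF pp[of "r i"]] assms(4)[OF i] by blast
  qed
  define Q where "Q = p ^ r m"
  have mm: "m \<in> {1..m}" using assms(3) by simp
  have Q1: "Q \<ge> 2" proof -
    have "p ^ 1 \<le> p ^ r m" using p2 assms(5)[OF mm] by (intro power_increasing) auto
    thus ?thesis using p2 Q_def by simp
  qed
  have "n \<ge> Q"
  proof (rule ccontr)
    assume "\<not> n \<ge> Q"
    hence "n mod Q = n" by simp
    moreover have "k m mod Q \<le> k m" by simp
    ultimately show False using C[OF mm] assms(4)[OF mm] unfolding Q_def by linarith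
  qed
  show ?thesis
  proof (intro exI[of _ "Q - 1"] conjI ballI)
    show "0 < Q - 1" "Q - 1 \<le> n" using Q1 \<open>n \<ge> Q\<close> by auto
    fix i assume i: "i \<in> {1..m}"
    have le: "r i \<le> r m" using assms(6)[OF i mm] i by (cases "i = m") auto
    have dv: "p ^ r i dvd Q" unfolding Q_def using le by (simp add: le_imp_power_dvd)
    have QS: "Q = Suc (Q - 1)" using Q1 by simp
    have "Suc (Q - 1) mod p ^ r i = 0" using dv QS by simp
    hence md: "(Q - 1) mod p ^ r i = p ^ r i - 1"
      by (metis mod_Suc diff_Suc_1 nat.distinct(1))
    have "n mod p ^ r i < p ^ r i - 1"
      using C[OF i] mod_less_divisor[OF pp[of "r i"], of "k i"] by linarith
    hence "n mod p ^ r i < (Q - 1) mod p ^ r i" using md by simp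
    hence "\<lfloor>real n / real (p ^ r i)\<rfloor> - \<lfloor>real (Q - 1) / real (p ^ r i)\<rfloor>
             - \<lfloor>real (n - (Q - 1)) / real (p ^ r i)\<rfloor> = 1"
      using carry_iff[OF pp[of "r i"]] \<open>Q - 1 \<le> n\<close> by blast
    thus "\<lfloor>real n / real p ^ r i\<rfloor> - \<lfloor>real (Q - 1) / real p ^ r i\<rfloor>
             - \<lfloor>real (n - (Q - 1)) / real p ^ r i\<rfloor> = 1" by simp
  qed
qed

end
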